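(* (Flocking of the Cucker–Smale model.) Let $(\mathbf x(t),\mathbf v(t))=(\mathbf x_1,\dots,\mathbf x_N,\mathbf v_1,\dots,\mathbf v_N)(t)$ be a global classical solution of the Cucker–Smale system with communication kernel $\phi$ (essential communication diameter $D_\phi>0$) and amplitude $\kappa>0$, with initial data $(\mathbf x_0,\mathbf v_0)$. Assume the set of initial positions $\{\mathbf x_1(0),\dots,\mathbf x_N(0)\}$ is chain connected at scale $r$, with $r\le\frac16D_\phi$. Let $$\kappa_0:=\frac{16N^4}{r}|\delta\mathbf v_0|_2 .$$ Then there is an absolute constant $C\ge1$ such that if $\kappa\ge C\kappa_0$, then for all $t\ge0$ $$\max_{1\le i\le N}|\mathbf v_i(t)-\overline{\mathbf v}_0|\le|\delta\mathbf v_0|_\infty e^{-\frac{\kappa}{N}t}+2N|\delta\mathbf v_0|_2\,e^{-\frac{\kappa}{N^3}t}.$$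
   Context: A communication kernel is a function $\phi:[0,\infty)\to[0,\infty)$ (no regularity or boundedness assumed); $D_\phi:=\sup\{s>0:\ \phi(h)\ge1\text{ for all }0<h\le s\}$. The Cucker–Smale system on $\Omega=\mathbb T^d$ or $\mathbb R^d$ is $\dot{\mathbf x}_i=\mathbf v_i$, $\dot{\mathbf v}_i=\frac{\kappa}{N}\sum_{j=1}^N\phi(|\mathbf x_i-\mathbf x_j|)(\mathbf v_j-\mathbf v_i)$, $i=1,\dots,N$. Notation: $|\delta\mathbf v(t)|_2^2:=\frac1{N^2}\sum_{i,j}|\mathbf v_i(t)-\mathbf v_j(t)|^2$, $|\delta\mathbf v(t)|_\infty:=\max_{i,j}|\mathbf v_i(t)-\mathbf v_j(t)|$, $\delta\mathbf v_0:=\delta\mathbf v(0)$, $\overline{\mathbf v}_0:=\frac1N\sum_i\mathbf v_i(0)$. A finite set $P$ is chain connected at scale $r$ if every pair $\mathbf x,\mathbf y\in P$ is connected by a finite chain of balls $B_1,\dots,B_k$ of diameter $r$ with centers in $P$, consecutive balls having non-empty intersection, $\mathbf x\in\overline{B_1}$, $\mathbf y\in\overline{B_k}$. *)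

theory Defs
  imports Complex_Main "HOL-Library.Extended_Real"
begin

text \<open>Points of R^d are represented as functions nat => real; only the
components k < d matter. The dimension d is an explicit natural number so that
the constant C of the theorem can be required to be independent of d.\<close>

definition enorm :: "nat \<Rightarrow> (nat \<Rightarrow> real) \<Rightarrow> real" where
  "enorm d u = sqrt (\<Sum>k<d. (u k)\<^sup>2)"

text \<open>Distance on the flat torus R^d / (L Z)^d, computed on lifted coordinates.\<close>
definition torus_dist :: "real \<Rightarrow> nat \<Rightarrow> (nat \<Rightarrow> real) \<Rightarrow> (nat \<Rightarrow> real) \<Rightarrow> real" where
  "torus_dist L d u w = Inf {enorm d (\<lambda>k. u k - w k - L * real_of_int (m k)) | m :: nat \<Rightarrow> int. True}"

definition omega_dist :: "bool \<Rightarrow> real \<Rightarrow> nat \<Rightarrow> (nat \<Rightarrow> real) \<Rightarrow> (nat \<Rightarrow> real) \<Rightarrow> real" where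
  "omega_dist torus L d u w = (if torus then torus_dist L d u w else enorm d (\<lambda>k. u k - w k))"

text \<open>Essential communication diameter, valued in the extended reals
(it is +infinity if phi >= 1 on all of (0, infinity)).\<close>
definition D_phi :: "(real \<Rightarrow> real) \<Rightarrow> ereal" where
  "D_phi \<phi> = Sup (ereal ` {s. s > 0 \<and> (\<forall>h. 0 < h \<and> h \<le> s \<longrightarrow> \<phi> h \<ge> 1)})"

text \<open>Chain connectedness at scale r with respect to a distance function: balls of
diameter r are the open balls of radius r/2; their closures are the closed balls.\<close>
definition chain_connected ::
  "('p \<Rightarrow> 'p \<Rightarrow> real) \<Rightarrow> real \<Rightarrow> 'p set \<Rightarrow> bool" where
  "chain_connected \<delta> r P \<longleftrightarrow>
     (\<forall>x\<in>P. \<forall>y\<in>P. \<exists>cs. cs \<noteq> [] \<and> set cs \<subseteq> P \<and>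
        (\<forall>i. Suc i < length cs \<longrightarrow>
             (\<exists>z. \<delta> (cs ! i) z < r / 2 \<and> \<delta> (cs ! Suc i) z < r / 2)) \<and>
        \<delta> (hd cs) x \<le> r / 2 \<and> \<delta> (last cs) y \<le> r / 2)"

definition CS_solution ::
  "bool \<Rightarrow> real \<Rightarrow> nat \<Rightarrow> nat \<Rightarrow> real \<Rightarrow> (real \<Rightarrow> real)
   \<Rightarrow> (nat \<Rightarrow> real \<Rightarrow> nat \<Rightarrow> real) \<Rightarrow> (nat \<Rightarrow> real \<Rightarrow> nat \<Rightarrow> real) \<Rightarrow> bool" where
  "CS_solution torus L d N \<kappa> \<phi> x v \<longleftrightarrow>
     (\<forall>i<N. \<forall>k<d. \<forall>t\<ge>0.
        ((\<lambda>s. x i s k) has_real_derivative v i t k) (at t within {0..}) \<and>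
        ((\<lambda>s. v i s k) has_real_derivative
            (\<kappa> / real N) * (\<Sum>j<N. \<phi> (omega_dist torus L d (x i t) (x j t)) * (v j t k - v i t k)))
          (at t within {0..}))"

definition dv2 :: "nat \<Rightarrow> nat \<Rightarrow> (nat \<Rightarrow> real \<Rightarrow> nat \<Rightarrow> real) \<Rightarrow> real \<Rightarrow> real" where
  "dv2 d N v t = sqrt ((1 / (real N)\<^sup>2) *
      (\<Sum>i<N. \<Sum>j<N. (enorm d (\<lambda>k. v i t k - v j t k))\<^sup>2))"

definition dvinf :: "nat \<Rightarrow> nat \<Rightarrow> (nat \<Rightarrow> real \<Rightarrow> nat \<Rightarrow> real) \<Rightarrow> real \<Rightarrow> real" where
  "dvinf d N v t = Max {enorm d (\<lambda>k. v i t k - v j t k) | i j. i < N \<and> j < N}"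

definition vbar0 :: "nat \<Rightarrow> (nat \<Rightarrow> real \<Rightarrow> nat \<Rightarrow> real) \<Rightarrow> nat \<Rightarrow> real" where
  "vbar0 N v = (\<lambda>k. (1 / real N) * (\<Sum>i<N. v i 0 k))"

end

theory Submission imports Defs "HOL-Analysis.Analysis" begin



lemma enorm_L2: "enorm d u = L2_set u {..<d}"
  by (simp add: enorm_def L2_set_def)

lemma enorm_nonneg: "0 \<le> enorm d u"
  by (simp add: enorm_def sum_nonneg)

lemma enorm_triangle: "enorm d (\<lambda>k. a k + b k) \<le> enorm d a + enorm d b"
  unfolding enorm_L2 by (rule L2_set_triangle_ineq)

lemma enorm_triangle': "enorm d (\<lambda>k. a k - b k) \<le> enorm d (\<lambda>k. a k - c k) + enorm d (\<lambda>k. c k - b k)"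
  using enorm_triangle[of d "\<lambda>k. a k - c k" "\<lambda>k. c k - b k"] by simp

lemma enorm_minus: "enorm d (\<lambda>k. - a k) = enorm d a"
  by (simp add: enorm_def)

lemma enorm_sym: "enorm d (\<lambda>k. a k - b k) = enorm d (\<lambda>k. b k - a k)"
  unfolding enorm_def by (simp add: power2_commute)

lemma enorm_sq: "(enorm d u)\<^sup>2 = (\<Sum>k<d. (u k)\<^sup>2)"
  unfolding enorm_def by (simp add: sum_nonneg)

lemma enorm_coord: "k < d \<Longrightarrow> \<bar>u k\<bar> \<le> enorm d u"
  unfolding enorm_def
  by (rule real_le_rsqrt) (auto intro!: member_le_sum[of k "{..<d}" "\<lambda>k. (u k)^2", simplified])

lemma enorm_cs: "(\<Sum>k<d. a k * b k) \<le> enorm d a * enorm d b"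
proof -
  have "(\<Sum>k<d. a k * b k) \<le> (\<Sum>k<d. \<bar>a k\<bar> * \<bar>b k\<bar>)"
    by (rule sum_mono) (simp add: abs_mult[symmetric])
  also have "\<dots> \<le> enorm d a * enorm d b" unfolding enorm_L2 by (rule L2_set_mult_ineq)
  finally show ?thesis .
qed

lemma enorm_cong: "(\<And>k. k < d \<Longrightarrow> a k = b k) \<Longrightarrow> enorm d a = enorm d b"
  unfolding enorm_def by simp

lemma torus_set_ne: "{enorm d (\<lambda>k. u k - w k - L * real_of_int (m k)) | m :: nat \<Rightarrow> int. True} \<noteq> {}"
  by auto

lemma torus_set_bdd: "bdd_below {enorm d (\<lambda>k. u k - w k - L * real_of_int (m k)) | m :: nat \<Rightarrow> int. True}"
  by (rule bdd_belowI[of _ 0]) (auto simp: enorm_nonneg)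

lemma torus_dist_le: "torus_dist L d u w \<le> enorm d (\<lambda>k. u k - w k - L * real_of_int (m k))"
  unfolding torus_dist_def by (rule cInf_lower[OF _ torus_set_bdd]) auto

lemma torus_dist_ge: "(\<And>m. c \<le> enorm d (\<lambda>k. u k - w k - L * real_of_int (m k))) \<Longrightarrow> c \<le> torus_dist L d u w"
  unfolding torus_dist_def by (rule cInf_greatest[OF torus_set_ne]) auto

lemma torus_dist_nonneg: "0 \<le> torus_dist L d u w"
  by (rule torus_dist_ge) (simp add: enorm_nonneg)

lemma torus_dist_sym: "torus_dist L d u w = torus_dist L d w u"
proof -
  have *: "torus_dist L d u w \<le> torus_dist L d w u" for u w
  proof (rule torus_dist_ge)
    fix m
    have "torus_dist L d u w \<le> enorm d (\<lambda>k. u k - w k - L * real_of_int ((\<lambda>k. - m k) k))"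
      by (rule torus_dist_le)
    also have "\<dots> = enorm d (\<lambda>k. w k - u k - L * real_of_int (m k))"
      using enorm_minus[of d "\<lambda>k. w k - u k - L * real_of_int (m k)"]
      by (simp add: algebra_simps)
    finally show "torus_dist L d u w \<le> \<dots>" .
  qed
  show ?thesis using *[of u w] *[of w u] by simp
qed

lemma torus_dist_shift:
  "torus_dist L d a b \<le> torus_dist L d a0 b0 + enorm d (\<lambda>k. (a k - b k) - (a0 k - b0 k))"
proof -
  have "torus_dist L d a b - enorm d (\<lambda>k. (a k - b k) - (a0 k - b0 k)) \<le> torus_dist L d a0 b0"
  proof (rule torus_dist_ge)
    fix m
    have "torus_dist L d a b \<le> enorm d (\<lambda>k. a k - b k - L * real_of_int (m k))"
      by (rule torus_dist_le)
    also have "\<dots> \<le> enorm d (\<lambda>k. (a k - b k) - (a0 k - b0 k)) + enorm d (\<lambda>k. a0 k - b0 k - L * real_of_int (m k))"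
      using enorm_triangle[of d "\<lambda>k. (a k - b k) - (a0 k - b0 k)" "\<lambda>k. a0 k - b0 k - L * real_of_int (m k)"]
      by (simp add: algebra_simps)
    finally show "torus_dist L d a b - enorm d (\<lambda>k. (a k - b k) - (a0 k - b0 k)) \<le> enorm d (\<lambda>k. a0 k - b0 k - L * real_of_int (m k))"
      by simp
  qed
  then show ?thesis by simp
qed

lemma torus_dist_triangle:
  "torus_dist L d a b \<le> torus_dist L d a c + torus_dist L d c b"
proof -
  have "torus_dist L d a b - torus_dist L d c b \<le> torus_dist L d a c"
  proof (rule torus_dist_ge)
    fix m1
    have "torus_dist L d a b - enorm d (\<lambda>k. a k - c k - L * real_of_int (m1 k)) \<le> torus_dist L d c b"
    proof (rule torus_dist_ge)
      fix m2
      have "torus_dist L d a b \<le> enorm d (\<lambda>k. a k - b k - L * real_of_int ((\<lambda>k. m1 k + m2 k) k))"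
        by (rule torus_dist_le)
      also have "\<dots> \<le> enorm d (\<lambda>k. a k - c k - L * real_of_int (m1 k)) + enorm d (\<lambda>k. c k - b k - L * real_of_int (m2 k))"
        using enorm_triangle[of d "\<lambda>k. a k - c k - L * real_of_int (m1 k)" "\<lambda>k. c k - b k - L * real_of_int (m2 k)"]
        by (simp add: algebra_simps)
      finally show "torus_dist L d a b - enorm d (\<lambda>k. a k - c k - L * real_of_int (m1 k)) \<le> enorm d (\<lambda>k. c k - b k - L * real_of_int (m2 k))"
        by simp
    qed
    then show "torus_dist L d a b - torus_dist L d c b \<le> enorm d (\<lambda>k. a k - c k - L * real_of_int (m1 k))"
      by simp
  qed
  then show ?thesis by simp
qed

lemma omega_dist_nonneg: "0 \<le> omega_dist t L d a b"
  by (simp add: omega_dist_def torus_dist_nonneg enorm_nonneg)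

lemma omega_dist_sym: "omega_dist t L d a b = omega_dist t L d b a"
  by (simp add: omega_dist_def torus_dist_sym enorm_sym[of d a b])

lemma omega_dist_triangle: "omega_dist t L d a b \<le> omega_dist t L d a c + omega_dist t L d c b"
  by (simp add: omega_dist_def torus_dist_triangle enorm_triangle')

lemma omega_dist_shift:
  "omega_dist t L d a b \<le> omega_dist t L d a0 b0 + enorm d (\<lambda>k. (a k - b k) - (a0 k - b0 k))"
proof (cases t)
  case True then show ?thesis by (simp add: omega_dist_def torus_dist_shift)
next
  case False
  then show ?thesis
    using enorm_triangle[of d "\<lambda>k. a0 k - b0 k" "\<lambda>k. (a k - b k) - (a0 k - b0 k)"]
    by (simp add: omega_dist_def algebra_simps)
qed

lemma omega_dist_zero:
  assumes "omega_dist t L d a b = 0" "k < d" "e > 0"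
  shows "\<exists>m::int. \<bar>a k - b k - L * m\<bar> < e"
proof (cases t)
  case True
  then have "torus_dist L d a b < e" using assms by (simp add: omega_dist_def)
  then obtain y where "y \<in> {enorm d (\<lambda>k. a k - b k - L * real_of_int (m k)) | m :: nat \<Rightarrow> int. True}" "y < e"
    unfolding torus_dist_def using cInf_less_iff[OF torus_set_ne torus_set_bdd] by blast
  then obtain m :: "nat \<Rightarrow> int" where "enorm d (\<lambda>k. a k - b k - L * real_of_int (m k)) < e" by auto
  then show ?thesis using enorm_coord[OF assms(2), of "\<lambda>k. a k - b k - L * real_of_int (m k)"]
    by (intro exI[of _ "m k"]) simp
next
  case False
  then have "enorm d (\<lambda>k. a k - b k) = 0" using assms by (simp add: omega_dist_def)
  then show ?thesis using enorm_coord[OF assms(2), of "\<lambda>k. a k - b k"] assms(3) by (intro exI[of _ 0]) auto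
qed




lemma decr_spike:
  fixes f f' :: "real \<Rightarrow> real"
  assumes "a \<le> b" "{a..b} \<subseteq> U"
    and der: "\<And>t. t \<in> {a..b} \<Longrightarrow> (f has_real_derivative f' t) (at t within U)"
    and neg: "negligible S"
    and le: "\<And>t. t \<in> {a..b} - S \<Longrightarrow> f' t \<le> 0"
  shows "f b \<le> f a"
proof -
  have "(f' has_integral (f b - f a)) {a..b}"
    apply (rule fundamental_theorem_of_calculus[OF assms(1)])
    using der assms(2) by (auto simp: has_real_derivative_iff_has_vector_derivative[symmetric]
        intro: has_field_derivative_subset)
  then have "((\<lambda>t. if t \<in> S then 0 else f' t) has_integral (f b - f a)) {a..b}"
    by (rule has_integral_spike[OF neg, rotated]) auto
  then have "f b - f a \<le> 0"
    by (rule has_integral_le[OF _ has_integral_0]) (use le in auto)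
  then show ?thesis by simp
qed

lemma const_deriv:
  fixes f :: "real \<Rightarrow> real"
  assumes "a \<le> b" "{a..b} \<subseteq> U"
    and der: "\<And>t. t \<in> {a..b} \<Longrightarrow> (f has_real_derivative 0) (at t within U)"
  shows "f b = f a"
proof -
  have "f b \<le> f a" by (rule decr_spike[OF assms(1,2) der, of "{}"]) auto
  moreover have "-f b \<le> -f a"
    by (rule decr_spike[OF assms(1,2), of "\<lambda>t. - f t" "\<lambda>_. 0" "{}"])
       (auto intro!: derivative_eq_intros der)
  ultimately show ?thesis by simp
qed

lemma path_cs:
  fixes y :: "nat \<Rightarrow> real"
  assumes "xs \<noteq> []"
  shows "(y (hd xs) - y (last xs))\<^sup>2 \<le> real (length xs - 1) *
          sum_list (map (\<lambda>(a,b). (y a - y b)\<^sup>2) (zip xs (tl xs)))"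
  using assms
proof (induction xs)
  case Nil then show ?case by simp
next
  case (Cons a xs)
  show ?case
  proof (cases xs)
    case Nil then show ?thesis by simp
  next
    case (Cons b rest)
    define D where "D = y b - y (last xs)"
    define n where "n = real (length xs - 1)"
    define S' where "S' = sum_list (map (\<lambda>(a,b). (y a - y b)\<^sup>2) (zip xs (tl xs)))"
    define w where "w = y a - y b"
    have IH: "D\<^sup>2 \<le> n * S'" using Cons.IH Cons unfolding D_def n_def S'_def by simp
    have n0: "n \<ge> 0" by (simp add: n_def)
    have S0: "S' \<ge> 0" unfolding S'_def by (rule sum_list_nonneg) auto
    have eq: "zip (a # xs) (tl (a # xs)) = (a, b) # zip xs (tl xs)" using Cons by simp
    have len: "real (length (a # xs) - 1) = n + 1" using Cons by (simp add: n_def)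
    have goal: "(w + D)\<^sup>2 \<le> (n + 1) * (w\<^sup>2 + S')"
    proof (cases "n = 0")
      case True
      then have "D = 0" using IH by simp
      then show ?thesis using True S0 by simp
    next
      case False
      then have npos: "n > 0" using n0 by simp
      have "n * (w + D)\<^sup>2 \<le> n * (n + 1) * w\<^sup>2 + (n + 1) * D\<^sup>2"
        using sum_squares_ge_zero[of "n*w - D" 0] 
        by (simp add: power2_eq_square algebra_simps)
      also have "\<dots> \<le> n * (n + 1) * w\<^sup>2 + (n + 1) * (n * S')"
        using IH n0 by (intro add_left_mono mult_left_mono) auto
      also have "\<dots> = n * ((n + 1) * (w\<^sup>2 + S'))" by (simp add: algebra_simps)
      finally show ?thesis using npos by simp
    qed
    have e1: "(y (hd (a # xs)) - y (last (a # xs)))\<^sup>2 = (w + D)\<^sup>2" using Cons by (simp add: w_def D_def)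
    have e2: "real (length (a # xs) - 1) * sum_list (map (\<lambda>(a,b). (y a - y b)\<^sup>2) (zip (a # xs) (tl (a # xs))))
       = (n + 1) * (w\<^sup>2 + S')" unfolding eq len by (simp add: S'_def w_def)
    show ?thesis unfolding e1 e2 by (rule goal)
  qed
qed

lemma sum_sq_diff_identity:
  fixes a :: "nat \<Rightarrow> real"
  shows "(\<Sum>i<N. \<Sum>j<N. (a i - a j)\<^sup>2) = 2 * real N * (\<Sum>i<N. (a i)\<^sup>2) - 2 * (\<Sum>i<N. a i)\<^sup>2"
proof -
  have "(\<Sum>i<N. \<Sum>j<N. (a i - a j)\<^sup>2) = (\<Sum>i<N. \<Sum>j<N. ((a i)\<^sup>2 + (a j)\<^sup>2) - 2 * (a i * a j))"
    by (simp add: power2_eq_square algebra_simps)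
  also have "\<dots> = (\<Sum>i<N. \<Sum>j<N. (a i)\<^sup>2) + (\<Sum>i<N. \<Sum>j<N. (a j)\<^sup>2) - 2 * (\<Sum>i<N. \<Sum>j<N. a i * a j)"
    by (simp only: sum_subtractf sum.distrib sum_distrib_left)
  also have "(\<Sum>i<N. \<Sum>j<N. (a i)\<^sup>2) = real N * (\<Sum>i<N. (a i)\<^sup>2)"
    by (simp add: sum_distrib_left)
  also have "(\<Sum>i<N. \<Sum>j<N. (a j)\<^sup>2) = real N * (\<Sum>i<N. (a i)\<^sup>2)"
    by simp
  also have "(\<Sum>i<N. \<Sum>j<N. a i * a j) = (\<Sum>i<N. a i)\<^sup>2"
    by (simp add: power2_eq_square sum_product)
  finally show ?thesis by simp
qed

lemma sym_sum_identity:
  fixes w :: "nat \<Rightarrow> nat \<Rightarrow> real" and a :: "nat \<Rightarrow> nat \<Rightarrow> real"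
  assumes sym: "\<And>i j. w i j = w j i"
  shows "(\<Sum>i<N. \<Sum>j<N. w i j * (\<Sum>k<d. a i k * (a j k - a i k)))
       = - (1/2) * (\<Sum>i<N. \<Sum>j<N. w i j * (\<Sum>k<d. (a i k - a j k)\<^sup>2))"
proof -
  define X where "X = (\<Sum>i<N. \<Sum>j<N. w i j * (\<Sum>k<d. a i k * (a j k - a i k)))"
  have X2: "X = (\<Sum>i<N. \<Sum>j<N. w i j * (\<Sum>k<d. a j k * (a i k - a j k)))"
    unfolding X_def by (subst sum.swap) (simp add: sym)
  have "2 * X = (\<Sum>i<N. \<Sum>j<N. w i j * (\<Sum>k<d. a i k * (a j k - a i k)))
      + (\<Sum>i<N. \<Sum>j<N. w i j * (\<Sum>k<d. a j k * (a i k - a j k)))"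
    using X2 X_def by simp
  also have "\<dots> = (\<Sum>i<N. \<Sum>j<N. w i j * (\<Sum>k<d. a i k * (a j k - a i k) + a j k * (a i k - a j k)))"
    by (simp only: sum.distrib distrib_left)
  also have "\<dots> = (\<Sum>i<N. \<Sum>j<N. - (w i j * (\<Sum>k<d. (a i k - a j k)\<^sup>2)))"
  proof (intro sum.cong refl)
    fix i j
    have "(\<Sum>k<d. a i k * (a j k - a i k) + a j k * (a i k - a j k)) = (\<Sum>k<d. - ((a i k - a j k)\<^sup>2))"
      by (rule sum.cong) (auto simp: power2_eq_square algebra_simps)
    also have "\<dots> = - (\<Sum>k<d. (a i k - a j k)\<^sup>2)" by (rule sum_negf)
    finally show "w i j * (\<Sum>k<d. a i k * (a j k - a i k) + a j k * (a i k - a j k)) = - (w i j * (\<Sum>k<d. (a i k - a j k)\<^sup>2))"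
      by simp
  qed
  also have "\<dots> = - (\<Sum>i<N. \<Sum>j<N. w i j * (\<Sum>k<d. (a i k - a j k)\<^sup>2))"
    by (simp add: sum_negf)
  finally show ?thesis unfolding X_def by simp
qed

lemma lattice_lemma:
  fixes L p q :: real
  assumes L: "L > 0" and c: "0 < \<bar>p - q\<bar>" "\<bar>p - q\<bar> < L / 2"
    and hp: "\<And>e. e > 0 \<Longrightarrow> \<exists>m::int. \<bar>p - L * m\<bar> < e"
    and hq: "\<And>e. e > 0 \<Longrightarrow> \<exists>m::int. \<bar>q - L * m\<bar> < e"
  shows False
proof -
  define e where "e = min \<bar>p - q\<bar> (L/2) / 2"
  have e: "e > 0" using c L by (simp add: e_def)
  obtain m :: int where m: "\<bar>p - L * m\<bar> < e" using hp[OF e] by blast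
  obtain m' :: int where m': "\<bar>q - L * m'\<bar> < e" using hq[OF e] by blast
  show False
  proof (cases "m = m'")
    case True
    then have "\<bar>p - q\<bar> < 2 * e" using m m' by (simp add: abs_less_iff)
    then show False by (simp add: e_def)
  next
    case False
    then have "\<bar>real_of_int (m - m')\<bar> \<ge> 1" by linarith
    then have "\<bar>L * real_of_int (m - m')\<bar> \<ge> L" using L by (simp add: abs_mult)
    then have "\<bar>L * m - L * m'\<bar> \<ge> L" by (simp add: algebra_simps)
    then have "\<bar>p - q\<bar> \<ge> L - 2 * e" using m m' by (simp add: abs_less_iff abs_le_iff) linarith
    then show False using c by (simp add: e_def)
  qed
qed

lemma countable_isolated:
  fixes S :: "real set"
  assumes "\<And>s. s \<in> S \<Longrightarrow> \<exists>\<delta>>0. \<forall>s'\<in>S. s' \<noteq> s \<longrightarrow> \<delta> \<le> \<bar>s' - s\<bar>"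
  shows "countable S"
proof -
  obtain \<delta> where \<delta>: "\<And>s. s \<in> S \<Longrightarrow> \<delta> s > 0 \<and> (\<forall>s'\<in>S. s' \<noteq> s \<longrightarrow> \<delta> s \<le> \<bar>s' - s\<bar>)"
    using assms by metis
  have "\<exists>q\<in>\<rat>. s - \<delta> s / 2 < q \<and> q < s + \<delta> s / 2" if "s \<in> S" for s
    using Rats_dense_in_real[of "s - \<delta> s / 2" "s + \<delta> s / 2"] \<delta>[OF that] by auto
  then obtain q where q: "\<And>s. s \<in> S \<Longrightarrow> q s \<in> \<rat> \<and> s - \<delta> s / 2 < q s \<and> q s < s + \<delta> s / 2"
    by metis
  have "inj_on q S"
  proof (rule inj_onI, rule ccontr)
    fix s s' assume s: "s \<in> S" "s' \<in> S" "q s = q s'" "s \<noteq> s'"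
    have "\<delta> s \<le> \<bar>s' - s\<bar>" "\<delta> s' \<le> \<bar>s - s'\<bar>" using \<delta> s by auto
    moreover have "\<bar>s' - s\<bar> < \<delta> s / 2 + \<delta> s' / 2" using q[OF s(1)] q[OF s(2)] s(3) by auto
    ultimately show False by auto
  qed
  moreover have "q ` S \<subseteq> \<rat>" using q by auto
  ultimately show ?thesis
    using countable_rat countable_subset countable_image_inj_on by metis
qed

lemma countable_negligible:
  fixes S :: "real set"
  assumes "countable S" shows "negligible S"
proof -
  have "S = \<Union>((\<lambda>x. {x}) ` S)" by auto
  also have "negligible \<dots>" using assms by (intro negligible_countable_Union) auto
  finally show ?thesis .
qed




lemma succ_zip: "successively P xs \<Longrightarrow> (a,b) \<in> set (zip xs (tl xs)) \<Longrightarrow> P a b"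
proof (induction xs)
  case Nil then show ?case by simp
next
  case (Cons y xs)
  then show ?case by (cases xs) (auto simp: successively_Cons)
qed

lemma succ_cut: "successively P (xs @ y # ys @ y # zs) \<Longrightarrow> successively P (xs @ y # zs)"
  by (auto simp: successively_append_iff successively_Cons)

lemma shortest_walk:
  assumes "xs \<noteq> []" "hd xs = i" "last xs = j" "set xs \<subseteq> S" "successively A xs"
  shows "\<exists>xs. xs \<noteq> [] \<and> hd xs = i \<and> last xs = j \<and> set xs \<subseteq> S \<and> successively A xs \<and> distinct xs"
  using assms
proof (induction "length xs" arbitrary: xs rule: less_induct)
  case less
  show ?case
  proof (cases "distinct xs")
    case True then show ?thesis using less.prems by blast
  next
    case False
    then obtain p q s y where xs: "xs = p @ [y] @ q @ [y] @ s" using not_distinct_decomp by blast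
    define ys where "ys = p @ y # s"
    have "length ys < length xs" by (simp add: xs ys_def)
    moreover have "ys \<noteq> []" "hd ys = i" "last ys = j" "set ys \<subseteq> S" "successively A ys"
      using less.prems unfolding xs ys_def by (auto simp: hd_append last_append succ_cut)
    ultimately show ?thesis using less.hyps by blast
  qed
qed

lemma poincare_graph:
  fixes y :: "nat \<Rightarrow> real"
  assumes walks: "\<And>i j. i < N \<Longrightarrow> j < N \<Longrightarrow> \<exists>xs. xs \<noteq> [] \<and> hd xs = i \<and> last xs = j \<and>
            set xs \<subseteq> {..<N} \<and> successively A xs \<and> distinct xs"
  shows "(\<Sum>i<N. \<Sum>j<N. (y i - y j)\<^sup>2) \<le> real N ^ 3 * (\<Sum>i<N. \<Sum>j<N. if A i j then (y i - y j)\<^sup>2 else 0)"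
proof -
  define ES where "ES = (\<Sum>i<N. \<Sum>j<N. if A i j then (y i - y j)\<^sup>2 else 0)"
  have ES_eq: "ES = (\<Sum>p\<in>{..<N}\<times>{..<N}. if A (fst p) (snd p) then (y (fst p) - y (snd p))\<^sup>2 else 0)"
    unfolding ES_def by (simp add: sum.cartesian_product case_prod_beta)
  have trm: "(y i - y j)\<^sup>2 \<le> real N * ES" if ij: "i < N" "j < N" for i j
  proof -
    obtain xs where xs: "xs \<noteq> []" "hd xs = i" "last xs = j" "set xs \<subseteq> {..<N}" "successively A xs" "distinct xs"
      using walks[OF ij] by blast
    have len: "length xs \<le> N"
      using distinct_card[OF xs(6)] card_mono[OF _ xs(4)] by fastforce
    have "(y i - y j)\<^sup>2 \<le> real (length xs - 1) * sum_list (map (\<lambda>(a,b). (y a - y b)\<^sup>2) (zip xs (tl xs)))"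
      using path_cs[OF xs(1), of y] xs by simp
    also have "sum_list (map (\<lambda>(a,b). (y a - y b)\<^sup>2) (zip xs (tl xs))) = (\<Sum>p\<in>set (zip xs (tl xs)). (\<lambda>(a,b). (y a - y b)\<^sup>2) p)"
      by (rule sum_list_distinct_conv_sum_set[OF distinct_zipI1[OF xs(6)]])
    also have "\<dots> = (\<Sum>p\<in>set (zip xs (tl xs)). if A (fst p) (snd p) then (y (fst p) - y (snd p))\<^sup>2 else 0)"
      by (rule sum.cong) (auto dest: succ_zip[OF xs(5)])
    also have "\<dots> \<le> ES"
      unfolding ES_eq
    proof (rule sum_mono2)
      show "set (zip xs (tl xs)) \<subseteq> {..<N} \<times> {..<N}"
      proof
        fix p assume p: "p \<in> set (zip xs (tl xs))"
        obtain a b where ab: "p = (a, b)" by fastforce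
        have "a \<in> set xs" using p ab by (auto dest: set_zip_leftD)
        moreover have "b \<in> set (tl xs)" using p ab by (auto dest: set_zip_rightD)
        then have "b \<in> set xs" by (cases xs) auto
        ultimately show "p \<in> {..<N} \<times> {..<N}" using xs(4) ab by auto
      qed
    qed auto
    finally have "(y i - y j)\<^sup>2 \<le> real (length xs - 1) * ES"
      by (simp add: mult_left_mono)
    also have "\<dots> \<le> real N * ES"
      using len by (intro mult_right_mono) (auto simp: ES_def intro!: sum_nonneg)
    finally show ?thesis .
  qed
  have "(\<Sum>i<N. \<Sum>j<N. (y i - y j)\<^sup>2) \<le> (\<Sum>i<N. \<Sum>j<N. real N * ES)"
    by (intro sum_mono trm) auto
  also have "\<dots> = real N ^ 3 * ES" by (simp add: power3_eq_cube)
  finally show ?thesis unfolding ES_def .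
qed




locale CS =
  fixes torus :: bool and L :: real and d N :: nat and \<kappa> :: real and \<phi> :: "real \<Rightarrow> real"
    and x v :: "nat \<Rightarrow> real \<Rightarrow> nat \<Rightarrow> real" and r :: real
  assumes Lpos: "L > 0" and N1: "N \<ge> 1" and kpos: "\<kappa> > 0" and phinn: "\<forall>h\<ge>0. \<phi> h \<ge> 0"
    and sol: "CS_solution torus L d N \<kappa> \<phi> x v" and rpos: "r > 0"
    and chain: "chain_connected (omega_dist torus L d) r {x i 0 | i. i < N}"
    and rD: "ereal r \<le> D_phi \<phi> / 6"
    and kbig: "\<kappa> \<ge> 1 * (16 * (real N)^4 / r * dv2 d N v 0)"
begin

definition "dst i j t = omega_dist torus L d (x i t) (x j t)"
definition "F i t k = (\<kappa> / real N) * (\<Sum>j<N. \<phi> (dst i j t) * (v j t k - v i t k))"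
definition "vb = vbar0 N v"
definition "u i t k = v i t k - vb k"
definition "E t = (\<Sum>i<N. \<Sum>k<d. (u i t k)\<^sup>2)"
definition "E' t = (\<Sum>i<N. \<Sum>k<d. 2 * u i t k * F i t k)"
definition "Q t = (\<Sum>i<N. \<Sum>j<N. \<phi> (dst i j t) * (\<Sum>k<d. (u i t k - u j t k)\<^sup>2))"
definition "rate = 2 * \<kappa> / (real N)^3"
definition "A i j \<longleftrightarrow> i < N \<and> j < N \<and> dst i j 0 < r"
definition "ES t = (\<Sum>i<N. \<Sum>j<N. if A i j then (\<Sum>k<d. (u i t k - u j t k)\<^sup>2) else 0)"
definition "disp i j t = enorm d (\<lambda>k. (x i t k - x j t k) - (x i 0 k - x j 0 k))"
definition "Bad = {t. t \<ge> 0 \<and> (\<exists>i<N. \<exists>j<N. dst i j t = 0 \<and> (\<exists>k<d. v i t k \<noteq> v j t k))}"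

lemma Npos: "real N > 0" using N1 by simp

lemma dx: "i < N \<Longrightarrow> k < d \<Longrightarrow> t \<ge> 0 \<Longrightarrow> ((\<lambda>s. x i s k) has_real_derivative v i t k) (at t within {0..})"
  using sol unfolding CS_solution_def by blast

lemma dv: "i < N \<Longrightarrow> k < d \<Longrightarrow> t \<ge> 0 \<Longrightarrow> ((\<lambda>s. v i s k) has_real_derivative F i t k) (at t within {0..})"
  using sol unfolding CS_solution_def F_def dst_def by blast

lemma dst_sym: "dst i j t = dst j i t"
  unfolding dst_def by (rule omega_dist_sym)

lemma dst_nonneg: "dst i j t \<ge> 0"
  unfolding dst_def by (rule omega_dist_nonneg)

lemma phi_nonneg_dst: "\<phi> (dst i j t) \<ge> 0"
  using phinn dst_nonneg by blast

lemma two_r_lt: "ereal (2 * r) < D_phi \<phi>"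
proof (cases "D_phi \<phi>")
  case (real z)
  then show ?thesis using rD rpos by simp
next
  case PInf then show ?thesis by simp
next
  case MInf then show ?thesis using rD by simp
qed

lemma phi_ge1: assumes "0 < h" "h \<le> 2 * r" shows "1 \<le> \<phi> h"
proof -
  have "ereal (2 * r) < Sup (ereal ` {s. s > 0 \<and> (\<forall>h. 0 < h \<and> h \<le> s \<longrightarrow> \<phi> h \<ge> 1)})"
    using two_r_lt unfolding D_phi_def .
  then obtain s where "s > 0" "\<forall>h. 0 < h \<and> h \<le> s \<longrightarrow> \<phi> h \<ge> 1" "ereal (2 * r) < ereal s"
    by (auto simp: less_Sup_iff)
  then show ?thesis using assms by auto
qed

lemma sumF0: "(\<Sum>i<N. F i t k) = 0"
proof -
  have sw: "(\<Sum>i<N. \<Sum>j<N. \<phi> (dst i j t) * v j t k) = (\<Sum>i<N. \<Sum>j<N. \<phi> (dst i j t) * v i t k)"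
    by (subst sum.swap) (simp add: dst_sym)
  have Fi: "F i t k = (\<kappa> / real N) * ((\<Sum>j<N. \<phi> (dst i j t) * v j t k) - (\<Sum>j<N. \<phi> (dst i j t) * v i t k))" for i
    unfolding F_def by (simp add: sum_subtractf right_diff_distrib)
  have "(\<Sum>i<N. F i t k) = (\<kappa> / real N) * ((\<Sum>i<N. \<Sum>j<N. \<phi> (dst i j t) * v j t k) - (\<Sum>i<N. \<Sum>j<N. \<phi> (dst i j t) * v i t k))"
    by (simp only: Fi sum_distrib_left[symmetric] sum_subtractf)
  then show ?thesis using sw by simp
qed

lemma mean_const: assumes "k < d" "t \<ge> 0" shows "(\<Sum>i<N. v i t k) = (\<Sum>i<N. v i 0 k)"
proof (rule const_deriv[OF assms(2), of "{0..}"])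
  fix s assume "s \<in> {0..t}"
  then have "((\<lambda>s. \<Sum>i<N. v i s k) has_real_derivative (\<Sum>i<N. F i s k)) (at s within {0..})"
    using assms by (intro DERIV_sum dv) auto
  then show "((\<lambda>s. \<Sum>i<N. v i s k) has_real_derivative 0) (at s within {0..})"
    by (simp add: sumF0)
qed auto

lemma sum_u0: assumes "k < d" "t \<ge> 0" shows "(\<Sum>i<N. u i t k) = 0"
proof -
  have "(\<Sum>i<N. u i t k) = (\<Sum>i<N. v i t k) - real N * vb k"
    unfolding u_def by (simp add: sum_subtractf)
  also have "\<dots> = 0"
    using mean_const[OF assms] Npos unfolding vb_def vbar0_def by simp
  finally show ?thesis .
qed

lemma E_deriv: assumes "t \<ge> 0" shows "(E has_real_derivative E' t) (at t within {0..})"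
proof -
  have "((\<lambda>s. \<Sum>i<N. \<Sum>k<d. (u i s k)\<^sup>2) has_real_derivative (\<Sum>i<N. \<Sum>k<d. 2 * u i t k * F i t k)) (at t within {0..})"
  proof (intro DERIV_sum)
    fix i k assume "i \<in> {..<N}" "k \<in> {..<d}"
    then have du: "((\<lambda>s. u i s k) has_real_derivative F i t k) (at t within {0..})"
      using DERIV_diff[OF dv[of i k t] DERIV_const[of "vb k"]] assms unfolding u_def by simp
    show "((\<lambda>s. (u i s k)\<^sup>2) has_real_derivative 2 * u i t k * F i t k) (at t within {0..})"
      using DERIV_mult[OF du du] by (simp add: power2_eq_square algebra_simps)
  qed
  then show ?thesis unfolding E_def[abs_def] E'_def .
qed

lemma E'_eq: "E' t = - (\<kappa> / real N) * Q t"
proof -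
  have Fu: "F i t k = (\<kappa> / real N) * (\<Sum>j<N. \<phi> (dst i j t) * (u j t k - u i t k))" for i k
    unfolding F_def u_def by simp
  have T: "2 * u i t k * F i t k = 2 * (\<kappa> / real N) * (\<Sum>j<N. \<phi> (dst i j t) * (u i t k * (u j t k - u i t k)))" for i k
    by (simp add: Fu sum_distrib_left mult_ac)
  have "E' t = 2 * (\<kappa> / real N) * (\<Sum>i<N. \<Sum>k<d. \<Sum>j<N. \<phi> (dst i j t) * (u i t k * (u j t k - u i t k)))"
    unfolding E'_def T by (simp add: sum_distrib_left)
  also have "\<dots> = 2 * (\<kappa> / real N) * (\<Sum>i<N. \<Sum>j<N. \<phi> (dst i j t) * (\<Sum>k<d. u i t k * (u j t k - u i t k)))"
    by (simp add: sum_distrib_left sum.swap[of _ "{..<d}"])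
  also have "(\<Sum>i<N. \<Sum>j<N. \<phi> (dst i j t) * (\<Sum>k<d. u i t k * (u j t k - u i t k))) = - (1/2) * Q t"
    unfolding Q_def by (rule sym_sum_identity) (simp add: dst_sym)
  finally show ?thesis by simp
qed

end



context CS begin

lemma walks: assumes "i < N" "j < N"
  shows "\<exists>xs. xs \<noteq> [] \<and> hd xs = i \<and> last xs = j \<and> set xs \<subseteq> {..<N} \<and> successively A xs"
proof -
  define P where "P = {x i 0 | i. i < N}"
  define \<delta> where "\<delta> = omega_dist torus L d"
  have xi: "x i 0 \<in> P" "x j 0 \<in> P" using assms by (auto simp: P_def)
  have ch: "chain_connected \<delta> r P" using chain by (simp add: P_def \<delta>_def)
  then have "\<exists>cs. cs \<noteq> [] \<and> set cs \<subseteq> P \<and>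
    (\<forall>l. Suc l < length cs \<longrightarrow> (\<exists>z. \<delta> (cs ! l) z < r / 2 \<and> \<delta> (cs ! Suc l) z < r / 2)) \<and>
    \<delta> (hd cs) (x i 0) \<le> r / 2 \<and> \<delta> (last cs) (x j 0) \<le> r / 2"
    using xi unfolding chain_connected_def by blast
  then obtain cs where cs: "cs \<noteq> []" "set cs \<subseteq> P"
    "\<forall>l. Suc l < length cs \<longrightarrow> (\<exists>z. \<delta> (cs ! l) z < r / 2 \<and> \<delta> (cs ! Suc l) z < r / 2)"
    "\<delta> (hd cs) (x i 0) \<le> r / 2" "\<delta> (last cs) (x j 0) \<le> r / 2"
    by blast
  define idx where "idx p = (SOME l. l < N \<and> x l 0 = p)" for p
  have idx: "idx p < N \<and> x (idx p) 0 = p" if "p \<in> P" for p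
  proof -
    have "\<exists>l. l < N \<and> x l 0 = p" using that by (auto simp: P_def)
    then show ?thesis unfolding idx_def by (rule someI_ex)
  qed
  have idxc: "idx p < N" "x (idx p) 0 = p" if "p \<in> set cs" for p
    using idx[of p] that cs(2) by auto
  have Ad: "A a b \<longleftrightarrow> a < N \<and> b < N \<and> \<delta> (x a 0) (x b 0) < r" for a b
    by (simp add: A_def dst_def \<delta>_def)
  have hdin: "hd cs \<in> set cs" "last cs \<in> set cs" using cs(1) by auto
  define W where "W = (i # map idx cs) @ [j]"
  have s1': "\<forall>l. Suc l < length cs \<longrightarrow> A (idx (cs ! l)) (idx (cs ! Suc l))"
  proof (intro allI impI)
    fix l assume l: "Suc l < length cs"
    then have mem: "cs ! l \<in> set cs" "cs ! Suc l \<in> set cs" by auto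
    obtain z where z: "\<delta> (cs ! l) z < r / 2" "\<delta> (cs ! Suc l) z < r / 2" using cs(3) l by blast
    have "\<delta> (cs ! l) (cs ! Suc l) \<le> \<delta> (cs ! l) z + \<delta> z (cs ! Suc l)"
      unfolding \<delta>_def by (rule omega_dist_triangle)
    also have "\<delta> z (cs ! Suc l) = \<delta> (cs ! Suc l) z" unfolding \<delta>_def by (rule omega_dist_sym)
    finally have "\<delta> (cs ! l) (cs ! Suc l) < r" using z by simp
    then show "A (idx (cs ! l)) (idx (cs ! Suc l))" using idxc mem by (simp add: Ad)
  qed
  have s1: "successively A (map idx cs)"
    using s1' by (simp add: successively_map successively_conv_nth)
  have a1: "A i (idx (hd cs))"
    using idxc[OF hdin(1)] cs(4) assms rpos omega_dist_sym[of torus L d "x i 0" "hd cs"]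
    by (simp add: Ad \<delta>_def)
  have a2: "A (idx (last cs)) j"
    using idxc[OF hdin(2)] cs(5) assms rpos by (simp add: Ad \<delta>_def)
  have "successively A W"
    unfolding W_def successively_append_iff
    using cs(1) s1 a1 a2 by (auto simp: successively_Cons hd_map last_map)
  moreover have "set W \<subseteq> {..<N}" using assms idxc by (auto simp: W_def)
  moreover have "W \<noteq> []" "hd W = i" "last W = j" by (auto simp: W_def)
  ultimately show ?thesis by blast
qed

lemma dwalks: assumes "i < N" "j < N"
  shows "\<exists>xs. xs \<noteq> [] \<and> hd xs = i \<and> last xs = j \<and> set xs \<subseteq> {..<N} \<and> successively A xs \<and> distinct xs"
  using walks[OF assms] shortest_walk by meson

lemma ES_swap: "ES t = (\<Sum>k<d. \<Sum>i<N. \<Sum>j<N. if A i j then (u i t k - u j t k)\<^sup>2 else 0)"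
proof -
  have "ES t = (\<Sum>i<N. \<Sum>j<N. \<Sum>k<d. if A i j then (u i t k - u j t k)\<^sup>2 else 0)"
    unfolding ES_def by (intro sum.cong refl) simp
  also have "\<dots> = (\<Sum>k<d. \<Sum>i<N. \<Sum>j<N. if A i j then (u i t k - u j t k)\<^sup>2 else 0)"
    by (simp add: sum.swap[of _ _ "{..<d}"])
  finally show ?thesis .
qed

lemma poincare: assumes "t \<ge> 0" shows "2 * E t \<le> (real N)\<^sup>2 * ES t"
proof -
  have kin: "2 * real N * (\<Sum>i<N. (u i t k)\<^sup>2) \<le> real N ^ 3 * (\<Sum>i<N. \<Sum>j<N. if A i j then (u i t k - u j t k)\<^sup>2 else 0)"
    if "k < d" for k
    using poincare_graph[of N A "\<lambda>i. u i t k", OF dwalks] sum_sq_diff_identity[of "\<lambda>i. u i t k" N]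
      sum_u0[OF that assms] by simp
  have "2 * real N * E t = (\<Sum>k<d. 2 * real N * (\<Sum>i<N. (u i t k)\<^sup>2))"
    unfolding E_def by (simp add: sum_distrib_left sum.swap[of _ "{..<N}"])
  also have "\<dots> \<le> (\<Sum>k<d. real N ^ 3 * (\<Sum>i<N. \<Sum>j<N. if A i j then (u i t k - u j t k)\<^sup>2 else 0))"
    by (rule sum_mono) (use kin in auto)
  also have "\<dots> = real N ^ 3 * ES t" by (simp add: ES_swap sum_distrib_left)
  finally have "real N * (2 * E t) \<le> real N * ((real N)\<^sup>2 * ES t)"
    by (simp add: power3_eq_cube power2_eq_square algebra_simps)
  then show ?thesis using Npos by simp
qed

lemma Q_ge: assumes "t \<ge> 0" "t \<notin> Bad" "\<And>i j. i < N \<Longrightarrow> j < N \<Longrightarrow> disp i j t \<le> r"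
  shows "ES t \<le> Q t"
  unfolding ES_def Q_def
proof (intro sum_mono)
  fix i j assume ij: "i \<in> {..<N}" "j \<in> {..<N}"
  define S where "S = (\<Sum>k<d. (u i t k - u j t k)\<^sup>2)"
  have S0: "S \<ge> 0" unfolding S_def by (intro sum_nonneg) auto
  have key: "(if A i j then S else 0) \<le> \<phi> (dst i j t) * S"
  proof (cases "A i j")
    case False then show ?thesis using mult_nonneg_nonneg[OF phi_nonneg_dst[of i j t] S0] by simp
  next
    case True
    have "dst i j t \<le> dst i j 0 + disp i j t"
      unfolding dst_def disp_def by (rule omega_dist_shift)
    also have "\<dots> < 2 * r" using True assms(3)[of i j] ij by (simp add: A_def)
    finally have lt: "dst i j t < 2 * r" .
    show ?thesis
    proof (cases "dst i j t = 0")
      case True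
      then have "\<forall>k<d. v i t k = v j t k" using assms(1,2) ij by (auto simp: Bad_def)
      then have "S = 0" unfolding S_def u_def by simp
      then show ?thesis by simp
    next
      case False
      then have "dst i j t > 0" using dst_nonneg[of i j t] by simp
      then have "1 \<le> \<phi> (dst i j t)" using lt by (intro phi_ge1) auto
      then show ?thesis using S0 \<open>A i j\<close> by (simp add: mult_right_mono[of 1 _ S, simplified])
    qed
  qed
  then show "(if A i j then (\<Sum>k<d. (u i t k - u j t k)\<^sup>2) else 0) \<le> \<phi> (dst i j t) * (\<Sum>k<d. (u i t k - u j t k)\<^sup>2)"
    unfolding S_def by simp
qed

lemma E_rate: assumes "t \<ge> 0" "t \<notin> Bad" "\<And>i j. i < N \<Longrightarrow> j < N \<Longrightarrow> disp i j t \<le> r"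
  shows "E' t + rate * E t \<le> 0"
proof -
  have "2 * E t \<le> (real N)\<^sup>2 * Q t"
    using poincare[OF assms(1)] Q_ge[OF assms] Npos
    by (meson mult_left_mono order_trans zero_le_power le_less)
  then have "(\<kappa> / real N ^ 3) * (2 * E t) \<le> (\<kappa> / real N ^ 3) * ((real N)\<^sup>2 * Q t)"
    using kpos Npos by (intro mult_left_mono) auto
  also have "(\<kappa> / real N ^ 3) * ((real N)\<^sup>2 * Q t) = (\<kappa> / real N) * Q t"
    using Npos by (simp add: power2_eq_square power3_eq_cube field_simps)
  finally have "rate * E t \<le> (\<kappa> / real N) * Q t" by (simp add: rate_def field_simps)
  then show ?thesis by (simp add: E'_eq)
qed

end



context CS begin

definition "B i j = {t. t \<ge> 0 \<and> dst i j t = 0 \<and> (\<exists>k<d. v i t k \<noteq> v j t k)}"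

lemma bad_isolated:
  assumes ij: "i < N" "j < N" and t0: "t0 \<in> B i j"
  shows "\<exists>\<delta>>0. \<forall>t\<in>B i j. t \<noteq> t0 \<longrightarrow> \<delta> \<le> \<bar>t - t0\<bar>"
proof -
  from t0 obtain k where k: "k < d" "v i t0 k \<noteq> v j t0 k" and t0pos: "t0 \<ge> 0" and d0: "dst i j t0 = 0"
    by (auto simp: B_def)
  define w where "w = v i t0 k - v j t0 k"
  define f where "f s = x i s k - x j s k" for s
  have w0: "w \<noteq> 0" using k by (simp add: w_def)
  have "(f has_real_derivative w) (at t0 within {0..})"
    unfolding f_def w_def by (rule DERIV_diff; rule dx) (use ij k t0pos in auto)
  then have "((\<lambda>y. (f y - f t0) / (y - t0)) \<longlongrightarrow> w) (at t0 within {0..})"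
    by (simp add: has_field_derivative_iff)
  moreover have "\<bar>w\<bar> / 2 > 0" using w0 by simp
  ultimately have "eventually (\<lambda>y. dist ((f y - f t0) / (y - t0)) w < \<bar>w\<bar> / 2) (at t0 within {0..})"
    by (rule tendstoD)
  then obtain \<delta>1 where \<delta>1: "\<delta>1 > 0"
    "\<And>y. y \<in> {0..} \<Longrightarrow> y \<noteq> t0 \<Longrightarrow> dist y t0 < \<delta>1 \<Longrightarrow> dist ((f y - f t0) / (y - t0)) w < \<bar>w\<bar> / 2"
    unfolding eventually_at by blast
  define \<delta> where "\<delta> = min \<delta>1 (L / (4 * \<bar>w\<bar>))"
  have \<delta>pos: "\<delta> > 0" using \<delta>1 Lpos w0 by (simp add: \<delta>_def)
  have "\<delta> \<le> \<bar>t - t0\<bar>" if t: "t \<in> B i j" "t \<noteq> t0" for t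
  proof (rule ccontr)
    assume "\<not> \<delta> \<le> \<bar>t - t0\<bar>"
    then have close: "\<bar>t - t0\<bar> < \<delta>" by simp
    have tpos: "t \<ge> 0" and dt: "dst i j t = 0" using t by (auto simp: B_def)
    define q where "q = (f t - f t0) / (t - t0)"
    have "dist q w < \<bar>w\<bar> / 2" unfolding q_def
      using \<delta>1(2)[of t] tpos t(2) close by (simp add: dist_real_def \<delta>_def)
    then have qw: "\<bar>q - w\<bar> < \<bar>w\<bar> / 2" by (simp add: dist_real_def)
    have qlow: "\<bar>q\<bar> > 0" using qw by linarith
    have qhigh: "\<bar>q\<bar> < 3 * \<bar>w\<bar> / 2" using qw by linarith
    have ne: "t - t0 \<noteq> 0" using t(2) by simp
    have fq: "f t - f t0 = q * (t - t0)" unfolding q_def using ne by simp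
    have pos: "0 < \<bar>f t - f t0\<bar>" using qlow ne by (simp add: fq abs_mult)
    have "\<bar>f t - f t0\<bar> = \<bar>q\<bar> * \<bar>t - t0\<bar>" by (simp add: fq abs_mult)
    also have "\<dots> < (3 * \<bar>w\<bar> / 2) * (L / (4 * \<bar>w\<bar>))"
    proof (rule mult_strict_mono)
      show "\<bar>t - t0\<bar> < L / (4 * \<bar>w\<bar>)" using close by (simp add: \<delta>_def)
    qed (use qhigh in auto)
    also have "\<dots> = 3 * L / 8" using w0 by (simp add: field_simps)
    finally have lt: "\<bar>f t - f t0\<bar> < L / 2" using Lpos by simp
    show False
    proof (rule lattice_lemma[OF Lpos pos lt])
      fix e :: real assume "e > 0"
      then show "\<exists>m::int. \<bar>f t - L * m\<bar> < e"
        using omega_dist_zero[of torus L d "x i t" "x j t" k e] dt k by (simp add: dst_def f_def)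
    next
      fix e :: real assume "e > 0"
      then show "\<exists>m::int. \<bar>f t0 - L * m\<bar> < e"
        using omega_dist_zero[of torus L d "x i t0" "x j t0" k e] d0 k by (simp add: dst_def f_def)
    qed
  qed
  then show ?thesis using \<delta>pos by blast
qed

lemma Bad_negligible: "negligible Bad"
proof -
  have "Bad = (\<Union>i<N. \<Union>j<N. B i j)" by (auto simp: Bad_def B_def)
  moreover have "countable (B i j)" if "i < N" "j < N" for i j
    by (rule countable_isolated) (use bad_isolated[OF that] in blast)
  ultimately have "countable Bad" by (auto intro!: countable_UN)
  then show ?thesis by (rule countable_negligible)
qed

lemma energy:
  assumes T: "T \<ge> 0" and good: "\<And>\<tau> i j. \<tau> \<in> {0..T} \<Longrightarrow> i < N \<Longrightarrow> j < N \<Longrightarrow> disp i j \<tau> \<le> r"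
  shows "E T \<le> E 0 * exp (- rate * T)"
proof -
  define g' where "g' \<tau> = E' \<tau> * exp (rate * \<tau>) + exp (rate * \<tau>) * rate * E \<tau>" for \<tau>
  have "E T * exp (rate * T) \<le> E 0 * exp (rate * 0)"
  proof (rule decr_spike[OF T, of "{0..}" _ g' Bad])
    fix \<tau> assume \<tau>: "\<tau> \<in> {0..T}"
    have e: "((\<lambda>\<tau>. exp (rate * \<tau>)) has_real_derivative exp (rate * \<tau>) * rate) (at \<tau> within {0..})"
      by (auto intro!: derivative_eq_intros)
    show "((\<lambda>\<tau>. E \<tau> * exp (rate * \<tau>)) has_real_derivative g' \<tau>) (at \<tau> within {0..})"
      unfolding g'_def using DERIV_mult[OF E_deriv e] \<tau> by simp
  next
    fix \<tau> assume \<tau>: "\<tau> \<in> {0..T} - Bad"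
    have "E' \<tau> + rate * E \<tau> \<le> 0"
      by (rule E_rate) (use \<tau> good in auto)
    then have "exp (rate * \<tau>) * (E' \<tau> + rate * E \<tau>) \<le> 0"
      by (simp add: mult_nonneg_nonpos)
    then show "g' \<tau> \<le> 0" unfolding g'_def by (simp add: algebra_simps)
  qed (auto simp: Bad_negligible)
  then have "E T * exp (rate * T) * exp (- rate * T) \<le> E 0 * exp (- rate * T)"
    by (intro mult_right_mono) auto
  then show ?thesis by (simp add: mult.assoc exp_add[symmetric])
qed

lemma sqrt_exp: "sqrt (exp a) = exp (a / 2)"
proof (rule real_sqrt_unique)
  show "(exp (a / 2))\<^sup>2 = exp a" by (simp add: power2_eq_square exp_add[symmetric])
qed auto

lemma E_nonneg: "E t \<ge> 0" unfolding E_def by (intro sum_nonneg) auto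

lemma rate_pos: "rate > 0" using kpos Npos by (simp add: rate_def)

lemma enorm_u_le: "i < N \<Longrightarrow> enorm d (u i t) \<le> sqrt (E t)"
  unfolding enorm_def E_def
  by (rule real_sqrt_le_mono, rule member_le_sum[of i "{..<N}" "\<lambda>i. \<Sum>k<d. (u i t k)\<^sup>2"])
     (auto intro!: sum_nonneg)

lemma disp_bound:
  assumes T: "T \<ge> 0" and dec: "\<And>\<tau>. \<tau> \<in> {0..T} \<Longrightarrow> E \<tau> \<le> E 0 * exp (- rate * \<tau>)"
    and ij: "i < N" "j < N"
  shows "disp i j T \<le> 4 * sqrt (E 0) / rate"
proof -
  define e where "e k = (x i T k - x j T k) - (x i 0 k - x j 0 k)" for k
  define ne where "ne = enorm d e"
  define K where "K = 2 * sqrt (E 0)"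
  define lin where "lin \<tau> = (\<Sum>k<d. e k * ((x i \<tau> k - x j \<tau> k) - (x i 0 k - x j 0 k)))" for \<tau>
  define h where "h \<tau> = lin \<tau> + ne * (2 * K / rate) * exp (- (rate / 2) * \<tau>)" for \<tau>
  define h' where "h' \<tau> = (\<Sum>k<d. e k * (v i \<tau> k - v j \<tau> k)) + ne * (2 * K / rate) * (exp (- (rate / 2) * \<tau>) * (- (rate / 2)))" for \<tau>
  have ne0: "ne \<ge> 0" by (simp add: ne_def enorm_nonneg)
  have K0: "K \<ge> 0" using E_nonneg[of 0] by (simp add: K_def)
  have "h T \<le> h 0"
  proof (rule decr_spike[OF T, of "{0..}" _ h' "{}"])
    fix \<tau> assume \<tau>: "\<tau> \<in> {0..T}"
    have dl: "(lin has_real_derivative (\<Sum>k<d. e k * (v i \<tau> k - v j \<tau> k))) (at \<tau> within {0..})"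
      unfolding lin_def[abs_def]
    proof (rule DERIV_sum)
      fix k assume k: "k \<in> {..<d}"
      show "((\<lambda>\<tau>. e k * ((x i \<tau> k - x j \<tau> k) - (x i 0 k - x j 0 k))) has_real_derivative e k * (v i \<tau> k - v j \<tau> k)) (at \<tau> within {0..})"
        using DERIV_cmult[OF DERIV_diff[OF DERIV_diff[OF dx[of i k \<tau>] dx[of j k \<tau>]] DERIV_const[of "x i 0 k - x j 0 k"]], of "e k"]
          k \<tau> ij by simp
    qed
    have de: "((\<lambda>\<tau>. ne * (2 * K / rate) * exp (- (rate / 2) * \<tau>)) has_real_derivative
        ne * (2 * K / rate) * (exp (- (rate / 2) * \<tau>) * (- (rate / 2)))) (at \<tau> within {0..})"
      by (auto intro!: derivative_eq_intros)
    show "(h has_real_derivative h' \<tau>) (at \<tau> within {0..})"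
      unfolding h_def[abs_def] h'_def using DERIV_add[OF dl de] by simp
  next
    fix \<tau> assume \<tau>: "\<tau> \<in> {0..T} - {}"
    then have \<tau>0: "\<tau> \<ge> 0" by simp
    have "enorm d (\<lambda>k. v i \<tau> k - v j \<tau> k) \<le> enorm d (\<lambda>k. v i \<tau> k - vb k) + enorm d (\<lambda>k. vb k - v j \<tau> k)"
      by (rule enorm_triangle')
    also have "\<dots> = enorm d (u i \<tau>) + enorm d (u j \<tau>)"
      using enorm_sym[of d vb "v j \<tau>"] by (simp add: u_def[abs_def])
    also have "\<dots> \<le> sqrt (E \<tau>) + sqrt (E \<tau>)" using enorm_u_le ij by (intro add_mono) auto
    also have "sqrt (E \<tau>) \<le> sqrt (E 0) * exp (- (rate / 2) * \<tau>)"
    proof -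
      have "sqrt (E \<tau>) \<le> sqrt (E 0 * exp (- rate * \<tau>))" using dec \<tau> E_nonneg by (auto intro: real_sqrt_le_mono)
      also have "\<dots> = sqrt (E 0) * exp (- (rate / 2) * \<tau>)"
        using E_nonneg by (simp add: real_sqrt_mult sqrt_exp)
      finally show ?thesis .
    qed
    finally have vb: "enorm d (\<lambda>k. v i \<tau> k - v j \<tau> k) \<le> K * exp (- (rate / 2) * \<tau>)"
      by (simp add: K_def)
    have "(\<Sum>k<d. e k * (v i \<tau> k - v j \<tau> k)) \<le> ne * enorm d (\<lambda>k. v i \<tau> k - v j \<tau> k)"
      unfolding ne_def by (rule enorm_cs)
    also have "\<dots> \<le> ne * (K * exp (- (rate / 2) * \<tau>))" using vb ne0 by (rule mult_left_mono)
    finally have 1: "(\<Sum>k<d. e k * (v i \<tau> k - v j \<tau> k)) \<le> ne * (K * exp (- (rate / 2) * \<tau>))" .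
    have 2: "ne * (2 * K / rate) * (exp (- (rate / 2) * \<tau>) * (- (rate / 2))) = - (ne * (K * exp (- (rate / 2) * \<tau>)))"
      using rate_pos by (simp add: field_simps)
    show "h' \<tau> \<le> 0" unfolding h'_def 2 using 1 by simp
  qed auto
  moreover have "lin T = ne\<^sup>2"
    unfolding lin_def ne_def enorm_sq by (simp add: e_def power2_eq_square)
  moreover have "lin 0 = 0" unfolding lin_def by simp
  ultimately have "ne\<^sup>2 + ne * (2 * K / rate) * exp (- (rate / 2) * T) \<le> ne * (2 * K / rate)"
    by (simp add: h_def)
  moreover have "ne * (2 * K / rate) * exp (- (rate / 2) * T) \<ge> 0"
    using ne0 K0 rate_pos by simp
  ultimately have "ne * ne \<le> ne * (2 * K / rate)" by (simp add: power2_eq_square)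
  then have "ne \<le> 2 * K / rate"
  proof (cases "ne = 0")
    case True then show ?thesis using K0 rate_pos by simp
  next
    case False
    then have "ne > 0" using ne0 by simp
    then show ?thesis using \<open>ne * ne \<le> ne * (2 * K / rate)\<close> mult_le_cancel_left_pos by blast
  qed
  then show ?thesis unfolding disp_def ne_def e_def[abs_def] K_def by simp
qed

end



context CS begin

lemma dv2_nonneg: "dv2 d N v 0 \<ge> 0"
  unfolding dv2_def by (rule real_sqrt_ge_zero, rule mult_nonneg_nonneg) (auto intro!: sum_nonneg)

lemma dv2_sq: "(dv2 d N v 0)\<^sup>2 = 2 * E 0 / real N"
proof -
  have nn: "0 \<le> (1 / (real N)\<^sup>2) * (\<Sum>i<N. \<Sum>j<N. (enorm d (\<lambda>k. v i 0 k - v j 0 k))\<^sup>2)"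
    by (rule mult_nonneg_nonneg) (auto intro!: sum_nonneg)
  have "(\<Sum>i<N. \<Sum>j<N. (enorm d (\<lambda>k. v i 0 k - v j 0 k))\<^sup>2) = (\<Sum>i<N. \<Sum>j<N. \<Sum>k<d. (u i 0 k - u j 0 k)\<^sup>2)"
    unfolding enorm_sq u_def by simp
  also have "\<dots> = (\<Sum>k<d. \<Sum>i<N. \<Sum>j<N. (u i 0 k - u j 0 k)\<^sup>2)"
    by (simp add: sum.swap[of _ _ "{..<d}"])
  also have "\<dots> = (\<Sum>k<d. 2 * real N * (\<Sum>i<N. (u i 0 k)\<^sup>2))"
    by (intro sum.cong refl) (simp add: sum_sq_diff_identity sum_u0)
  also have "\<dots> = 2 * real N * E 0"
    unfolding E_def by (simp add: sum_distrib_left sum.swap[of _ "{..<N}"])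
  finally have eq: "(\<Sum>i<N. \<Sum>j<N. (enorm d (\<lambda>k. v i 0 k - v j 0 k))\<^sup>2) = 2 * real N * E 0" .
  have "(dv2 d N v 0)\<^sup>2 = (1 / (real N)\<^sup>2) * (2 * real N * E 0)"
    unfolding dv2_def using nn eq by simp
  also have "\<dots> = 2 * E 0 / real N" using Npos by (simp add: power2_eq_square field_simps)
  finally show ?thesis .
qed

lemma sqrtE0: "sqrt (E 0) \<le> real N * dv2 d N v 0"
proof -
  have "E 0 = real N * (dv2 d N v 0)\<^sup>2 / 2" using dv2_sq Npos by (simp add: field_simps)
  then have h1: "E 0 \<le> real N * (dv2 d N v 0)\<^sup>2"
    using Npos E_nonneg[of 0] by simp
  have h2: "1 * (real N * (dv2 d N v 0)\<^sup>2) \<le> real N * (real N * (dv2 d N v 0)\<^sup>2)"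
    using N1 Npos by (intro mult_right_mono) auto
  have "E 0 \<le> (real N * dv2 d N v 0)\<^sup>2"
    using h1 h2 by (simp add: power2_eq_square algebra_simps)
  then have "sqrt (E 0) \<le> sqrt ((real N * dv2 d N v 0)\<^sup>2)" by (rule real_sqrt_le_mono)
  then show ?thesis using Npos dv2_nonneg by simp
qed

lemma M_le: "4 * sqrt (E 0) / rate \<le> r / 2"
proof -
  have kb: "16 * real N ^ 4 * dv2 d N v 0 \<le> \<kappa> * r"
    using kbig rpos by (simp add: field_simps)
  have "4 * sqrt (E 0) * real N ^ 3 \<le> 4 * (real N * dv2 d N v 0) * real N ^ 3"
    using sqrtE0 Npos by (intro mult_right_mono) auto
  also have "\<dots> = 4 * real N ^ 4 * dv2 d N v 0" by (simp add: power_def algebra_simps)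
  also have "\<dots> \<le> \<kappa> * r"
  proof -
    have "0 \<le> real N ^ 4 * dv2 d N v 0" using dv2_nonneg by simp
    then show ?thesis using kb by linarith
  qed
  finally have 1: "4 * sqrt (E 0) * real N ^ 3 \<le> \<kappa> * r" .
  have "4 * sqrt (E 0) / rate = 4 * sqrt (E 0) * real N ^ 3 / (2 * \<kappa>)"
    using kpos Npos by (simp add: rate_def field_simps)
  also have "\<dots> \<le> \<kappa> * r / (2 * \<kappa>)" using 1 kpos by (intro divide_right_mono) auto
  also have "\<dots> = r / 2" using kpos by simp
  finally show ?thesis .
qed

lemma disp_cont: assumes "i < N" "j < N" "s \<ge> 0"
  shows "((\<lambda>\<tau>. disp i j \<tau>) \<longlongrightarrow> disp i j s) (at s within {0..})"
proof -
  have xc: "((\<lambda>\<tau>. x l \<tau> k) \<longlongrightarrow> x l s k) (at s within {0..})" if "l < N" "k < d" for l k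
    using DERIV_continuous[OF dx[OF that assms(3)]] by (simp add: continuous_within)
  show ?thesis
    unfolding disp_def enorm_def
    by (intro tendsto_intros tendsto_sum) (use xc assms in auto)
qed

lemma disp0: "disp i j 0 = 0" by (simp add: disp_def enorm_def)

lemma all_good: "\<tau> \<ge> 0 \<Longrightarrow> i < N \<Longrightarrow> j < N \<Longrightarrow> disp i j \<tau> \<le> r"
proof (rule ccontr)
  assume a: "\<tau> \<ge> 0" "i < N" "j < N" "\<not> disp i j \<tau> \<le> r"
  define badT where "badT = {t. t \<ge> 0 \<and> (\<exists>i<N. \<exists>j<N. disp i j t > r)}"
  have "\<tau> \<in> badT" unfolding badT_def mem_Collect_eq using a not_le by blast
  then have ne: "badT \<noteq> {}" by blast
  have bdd: "bdd_below badT" by (rule bdd_belowI[of _ 0]) (auto simp: badT_def)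
  define s where "s = Inf badT"
  have s0: "s \<ge> 0" unfolding s_def by (rule cInf_greatest[OF ne]) (auto simp: badT_def)
  have below: "t \<notin> badT" if "t < s" for t
    using cInf_lower[OF _ bdd, of t] that by (auto simp: s_def)
  have st1: "disp i j s \<le> r" if ij: "i < N" "j < N" for i j
  proof (rule ccontr)
    assume "\<not> disp i j s \<le> r"
    then have gt: "disp i j s > r" by simp
    show False
    proof (cases "s = 0")
      case True then show False using gt disp0 rpos by simp
    next
      case False
      then have spos: "s > 0" using s0 by simp
      have "eventually (\<lambda>t. disp i j t > r) (at s within {0..})"
        using order_tendstoD(1)[OF disp_cont[OF ij s0] gt] .
      then obtain \<delta> where \<delta>: "\<delta> > 0" "\<And>t. t \<in> {0..} \<Longrightarrow> t \<noteq> s \<Longrightarrow> dist t s < \<delta> \<Longrightarrow> disp i j t > r"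
        unfolding eventually_at by blast
      define t where "t = s - min s \<delta> / 2"
      have t: "t \<ge> 0" "t < s" "dist t s < \<delta>" using spos \<delta>(1) by (auto simp: t_def dist_real_def)
      then have "disp i j t > r" using \<delta>(2)[of t] by auto
      then have "t \<in> badT" using t ij by (auto simp: badT_def)
      then show False using below t by blast
    qed
  qed
  have good: "disp i j t \<le> r" if "t \<in> {0..s}" "i < N" "j < N" for t i j
  proof (cases "t = s")
    case True then show ?thesis using st1 that by simp
  next
    case False then have "t < s" using that by simp
    then have "\<not> (\<exists>i<N. \<exists>j<N. disp i j t > r)" using below[of t] that by (auto simp: badT_def)
    then show ?thesis using that not_le by blast
  qed
  have dec: "E t \<le> E 0 * exp (- rate * t)" if "t \<in> {0..s}" for t
    by (rule energy) (use that good in auto)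
  have st2: "disp i j s < r" if ij: "i < N" "j < N" for i j
    using disp_bound[OF s0 dec ij] M_le rpos by simp
  have "eventually (\<lambda>t. \<forall>p\<in>{..<N}\<times>{..<N}. disp (fst p) (snd p) t < r) (at s within {0..})"
    by (rule eventually_ball_finite) (auto intro!: order_tendstoD(2)[OF disp_cont] st2 s0)
  then obtain \<delta> where \<delta>: "\<delta> > 0" "\<And>t. t \<in> {0..} \<Longrightarrow> t \<noteq> s \<Longrightarrow> dist t s < \<delta> \<Longrightarrow>
       \<forall>p\<in>{..<N}\<times>{..<N}. disp (fst p) (snd p) t < r"
    unfolding eventually_at by blast
  obtain t where t: "t \<in> badT" "t < s + \<delta>"
    using cInf_less_iff[OF ne bdd, of "s + \<delta>"] \<delta>(1) by (auto simp: s_def)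
  have "t \<ge> s" using cInf_lower[OF t(1) bdd] by (simp add: s_def)
  moreover have "t \<noteq> s" using t(1) st1 by (force simp: badT_def)
  ultimately have "\<forall>p\<in>{..<N}\<times>{..<N}. disp (fst p) (snd p) t < r"
    using \<delta>(2)[of t] t(2) s0 by (auto simp: dist_real_def)
  then show False using t(1) by (force simp: badT_def)
qed

lemma final:
  assumes t: "t \<ge> 0"
  shows "Max {enorm d (\<lambda>k. v i t k - vbar0 N v k) | i. i < N}
           \<le> dvinf d N v 0 * exp (- (\<kappa> / real N) * t)
              + 2 * real N * dv2 d N v 0 * exp (- (\<kappa> / (real N)^3) * t)"
proof -
  have Et: "E t \<le> E 0 * exp (- rate * t)"
    by (rule energy[OF t]) (auto intro: all_good)
  have "sqrt (E t) \<le> sqrt (E 0 * exp (- rate * t))" using Et by (rule real_sqrt_le_mono)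
  also have "\<dots> = sqrt (E 0) * exp (- (\<kappa> / (real N)^3) * t)"
    using E_nonneg[of 0] by (simp add: real_sqrt_mult sqrt_exp rate_def)
  also have "\<dots> \<le> (2 * real N * dv2 d N v 0) * exp (- (\<kappa> / (real N)^3) * t)"
  proof (intro mult_right_mono)
    have "0 \<le> real N * dv2 d N v 0" using dv2_nonneg by simp
    then show "sqrt (E 0) \<le> 2 * real N * dv2 d N v 0" using sqrtE0 by linarith
  qed simp
  finally have b: "sqrt (E t) \<le> 2 * real N * dv2 d N v 0 * exp (- (\<kappa> / (real N)^3) * t)" .
  have fin: "finite {enorm d (\<lambda>k. v i 0 k - v j 0 k) | i j. i < N \<and> j < N}"
  proof -
    have "{enorm d (\<lambda>k. v i 0 k - v j 0 k) | i j. i < N \<and> j < N}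
        = (\<lambda>p. enorm d (\<lambda>k. v (fst p) 0 k - v (snd p) 0 k)) ` ({..<N} \<times> {..<N})" by force
    then show ?thesis by simp
  qed
  have "enorm d (\<lambda>k. v 0 0 k - v 0 0 k) \<in> {enorm d (\<lambda>k. v i 0 k - v j 0 k) | i j. i < N \<and> j < N}"
    using N1 by (intro CollectI exI[of _ 0] conjI) auto
  then have dvinf0: "dvinf d N v 0 \<ge> 0"
    unfolding dvinf_def using fin by (meson Max_ge enorm_nonneg order_trans)
  have rest: "dvinf d N v 0 * exp (- (\<kappa> / real N) * t) \<ge> 0" using dvinf0 by simp
  have fin2: "finite {enorm d (\<lambda>k. v i t k - vbar0 N v k) | i. i < N}" by simp
  have ne2: "{enorm d (\<lambda>k. v i t k - vbar0 N v k) | i. i < N} \<noteq> {}" using N1 by force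
  show ?thesis
  proof (subst Max_le_iff[OF fin2 ne2], intro ballI)
    fix a assume "a \<in> {enorm d (\<lambda>k. v i t k - vbar0 N v k) | i. i < N}"
    then obtain i where i: "i < N" "a = enorm d (\<lambda>k. v i t k - vbar0 N v k)" by blast
    have "a = enorm d (u i t)" using i by (simp add: u_def[abs_def] vb_def)
    also have "\<dots> \<le> sqrt (E t)" using enorm_u_le i by simp
    finally show "a \<le> dvinf d N v 0 * exp (- (\<kappa> / real N) * t) + 2 * real N * dv2 d N v 0 * exp (- (\<kappa> / (real N)^3) * t)"
      using b rest by linarith
  qed
qed

end

theorem theorem1p2:
  "\<exists>C::real. C \<ge> 1 \<and>
    (\<forall>(torus::bool) (L::real) (d::nat) (N::nat) (\<kappa>::real) (\<phi>::real \<Rightarrow> real)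
       (x::nat \<Rightarrow> real \<Rightarrow> nat \<Rightarrow> real) (v::nat \<Rightarrow> real \<Rightarrow> nat \<Rightarrow> real) (r::real).
      L > 0 \<longrightarrow> N \<ge> 1 \<longrightarrow> \<kappa> > 0 \<longrightarrow>
      (\<forall>h\<ge>0. \<phi> h \<ge> 0) \<longrightarrow>
      D_phi \<phi> > 0 \<longrightarrow>
      CS_solution torus L d N \<kappa> \<phi> x v \<longrightarrow>
      r > 0 \<longrightarrow>
      chain_connected (omega_dist torus L d) r {x i 0 | i. i < N} \<longrightarrow>
      ereal r \<le> D_phi \<phi> / 6 \<longrightarrow>
      \<kappa> \<ge> C * (16 * (real N)^4 / r * dv2 d N v 0) \<longrightarrow>
      (\<forall>t\<ge>0.
         Max {enorm d (\<lambda>k. v i t k - vbar0 N v k) | i. i < N}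
           \<le> dvinf d N v 0 * exp (- (\<kappa> / real N) * t)
              + 2 * real N * dv2 d N v 0 * exp (- (\<kappa> / (real N)^3) * t)))"
proof (rule exI[of _ 1], intro conjI allI impI)
  fix torus L d N \<kappa> \<phi> x v r t
  assume "L > 0" "N \<ge> 1" "\<kappa> > 0" "\<forall>h\<ge>0. \<phi> h \<ge> (0::real)" "D_phi \<phi> > 0"
    "CS_solution torus L d N \<kappa> \<phi> x v" "r > 0"
    "chain_connected (omega_dist torus L d) r {x i 0 | i. i < N}"
    "ereal r \<le> D_phi \<phi> / 6" "\<kappa> \<ge> 1 * (16 * (real N)^4 / r * dv2 d N v 0)" "(t::real) \<ge> 0"
  then interpret CS torus L d N \<kappa> \<phi> x v r by unfold_locales auto
  show "Max {enorm d (\<lambda>k. v i t k - vbar0 N v k) | i. i < N}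
           \<le> dvinf d N v 0 * exp (- (\<kappa> / real N) * t)
              + 2 * real N * dv2 d N v 0 * exp (- (\<kappa> / (real N)^3) * t)"
    by (rule final) fact
qed simp



end
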